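(* Let $q>0$, $q\neq1$, $\hbar,m>0$. Let $\psi:(\mathbb{R}\setminus\{0\})\times\mathbb{R}\to\mathbb{C}$ be differentiable in $t$, nowhere zero, and satisfy $\partial_t\psi=\frac{i\hbar}{2m}D_x^2\psi$. Define $u(x,t)=-\frac{i\hbar}{m}\frac{D_x\psi(x,t)}{\psi(x,t)}$. Then for all $x\ne0$ and $t$, $$i\hbar\,\partial_tu(x,t)+\frac{\hbar^2}{2m}D_x^2u(x,t)=\frac{i\hbar}{2}u(x,t)\big[(1-M_q^x)D_xu\big](x,t)-\frac{i\hbar}{2}D_x\big(u(qx,t)u(x,t)\big)+\frac m2\big[u(q^2x,t)-u(x,t)\big]u(qx,t)u(x,t).$$
   Context: $D_x$ is the $q$-derivative in $x$ at fixed $t$: $D_xf(x,t)=\frac{f(qx,t)-f(x,t)}{(q-1)x}$, $D_x^2=D_x\circ D_x$; $\partial_t$ is the ordinary time derivative. $M_q^x$ is the dilation operator $(M_q^xf)(x,t)=f(qx,t)$. *)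

theory Defs
  imports "HOL-Analysis.Analysis"
begin

definition qD :: "real \<Rightarrow> (real \<Rightarrow> complex) \<Rightarrow> real \<Rightarrow> complex" where
  "qD q f x = (f (q * x) - f x) / complex_of_real ((q - 1) * x)"

end

theory Submission
  imports Defs
begin

lemma vd_div:
  fixes A B :: "real \<Rightarrow> complex"
  assumes "(A has_vector_derivative A') (at t)" "(B has_vector_derivative B') (at t)" "B t \<noteq> 0"
  shows "((\<lambda>s. A s / B s) has_vector_derivative ((A' * B t - A t * B') / (B t * B t))) (at t)"
proof -
  have "((\<lambda>s. A s / B s) has_derivative (\<lambda>h. ((h *\<^sub>R A') * B t - A t * (h *\<^sub>R B')) / (B t * B t))) (at t)"
    using assms by (intro has_derivative_divide') (auto simp: has_vector_derivative_def)
  moreover have "(\<lambda>h. ((h *\<^sub>R A') * B t - A t * (h *\<^sub>R B')) / (B t * B t)) = (\<lambda>h. h *\<^sub>R ((A' * B t - A t * B') / (B t * B t)))"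
    by (auto simp: fun_eq_iff scaleR_conv_of_real field_simps)
  ultimately show ?thesis by (simp add: has_vector_derivative_def)
qed

lemma alg:
  fixes p0 p1 p2 p3 Q h H M :: complex
  assumes "Q \<noteq> 0" "h \<noteq> 0" "p0 \<noteq> 0" "p1 \<noteq> 0" "p2 \<noteq> 0" "p3 \<noteq> 0" "M \<noteq> 0"
  and T0: "T0 = (\<i> * H / (2*M)) * (((p2 - p1)/(Q*h) - (p1-p0)/h) / h)"
  and T1: "T1 = (\<i> * H / (2*M)) * (((p3 - p2)/(Q*(Q*h)) - (p2-p1)/(Q*h)) / (Q*h))"
  and u0: "u0 = - (\<i> * H / M) * ((p1 - p0)/h) / p0"
  and u1: "u1 = - (\<i> * H / M) * ((p2 - p1)/(Q*h)) / p1"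
  and u2: "u2 = - (\<i> * H / M) * ((p3 - p2)/(Q*(Q*h))) / p2"
  and ut: "ut = ((- (\<i> * H / M) / h * (T1 - T0)) * p0 - (- (\<i> * H / M) / h * (p1 - p0)) * T0) / (p0 * p0)"
  shows "\<i> * H * ut + (H^2 / (2*M)) * (((u2 - u1)/(Q*h) - (u1-u0)/h) / h)
     = \<i> * H / 2 * u0 * ((u1 - u0)/h - (u2-u1)/(Q*h))
       - \<i> * H / 2 * ((u2*u1 - u1*u0)/h)
       + (M / 2) * (u2 - u0) * u1 * u0"
  unfolding ut T0 T1 u0 u1 u2 using assms(1-7)
  by (simp add: field_simps) algebra

theorem mainTheorem14:
  fixes q hbar m :: real and psi u :: "real \<Rightarrow> real \<Rightarrow> complex"
  assumes "q > 0" and "q \<noteq> 1" and "hbar > 0" and "m > 0"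
    and diff: "\<forall>x t. x \<noteq> 0 \<longrightarrow> (\<lambda>s. psi x s) differentiable (at t)"
    and nz: "\<forall>x t. x \<noteq> 0 \<longrightarrow> psi x t \<noteq> 0"
    and schr: "\<forall>x t. x \<noteq> 0 \<longrightarrow>
       vector_derivative (\<lambda>s. psi x s) (at t)
         = (\<i> * complex_of_real hbar / complex_of_real (2 * m)) * qD q (qD q (\<lambda>y. psi y t)) x"
    and u_def: "\<forall>x t. u x t
         = - (\<i> * complex_of_real hbar / complex_of_real m) * qD q (\<lambda>y. psi y t) x / psi x t"
  shows "\<forall>x t. x \<noteq> 0 \<longrightarrow>
     \<i> * complex_of_real hbar * vector_derivative (\<lambda>s. u x s) (at t)
       + complex_of_real (hbar ^ 2 / (2 * m)) * qD q (qD q (\<lambda>y. u y t)) x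
     = \<i> * complex_of_real hbar / 2 * u x t * (qD q (\<lambda>y. u y t) x - qD q (\<lambda>y. u y t) (q * x))
       - \<i> * complex_of_real hbar / 2 * qD q (\<lambda>y. u (q * y) t * u y t) x
       + complex_of_real (m / 2) * (u (q ^ 2 * x) t - u x t) * u (q * x) t * u x t"
proof (intro allI impI)
  fix x t :: real assume x: "x \<noteq> 0"
  define x1 where "x1 = q * x"
  define x2 where "x2 = q * x1"
  define x3 where "x3 = q * x2"
  have q0: "q \<noteq> 0" using assms(1) by simp
  have nz1: "x1 \<noteq> 0" "x2 \<noteq> 0" "x3 \<noteq> 0" using x q0 by (auto simp: x1_def x2_def x3_def)
  define Q where "Q = complex_of_real q"
  define h where "h = complex_of_real ((q - 1) * x)"
  define H where "H = complex_of_real hbar"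
  define M where "M = complex_of_real m"
  have Q0: "Q \<noteq> 0" using q0 by (simp add: Q_def)
  have h0: "h \<noteq> 0" using x assms(2) by (simp add: h_def)
  have M0: "M \<noteq> 0" using assms(4) by (simp add: M_def)
  have hx: "complex_of_real ((q - 1) * x) = h" by (simp add: h_def)
  have hx1: "complex_of_real ((q - 1) * x1) = Q * h" by (simp add: h_def Q_def x1_def)
  have hx2: "complex_of_real ((q - 1) * x2) = Q * (Q * h)" by (simp add: h_def Q_def x1_def x2_def)
  have qq: "q ^ 2 * x = x2" by (simp add: x1_def x2_def power2_eq_square)
  define p0 where "p0 = psi x t"
  define p1 where "p1 = psi x1 t"
  define p2 where "p2 = psi x2 t"
  define p3 where "p3 = psi x3 t"
  have pnz: "p0 \<noteq> 0" "p1 \<noteq> 0" "p2 \<noteq> 0" "p3 \<noteq> 0"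
    using nz x nz1 by (auto simp: p0_def p1_def p2_def p3_def)
  define T0 where "T0 = (\<i> * H / (2*M)) * (((p2 - p1)/(Q*h) - (p1-p0)/h) / h)"
  define T1 where "T1 = (\<i> * H / (2*M)) * (((p3 - p2)/(Q*(Q*h)) - (p2-p1)/(Q*h)) / (Q*h))"
  have d0: "((\<lambda>s. psi x s) has_vector_derivative T0) (at t)"
  proof -
    have "((\<lambda>s. psi x s) has_vector_derivative vector_derivative (\<lambda>s. psi x s) (at t)) (at t)"
      using diff x vector_derivative_works by blast
    moreover have "vector_derivative (\<lambda>s. psi x s) (at t) = T0"
      using schr x by (simp add: T0_def qD_def h_def Q_def x1_def x2_def x3_def mult_ac H_def M_def p0_def p1_def p2_def x1_def x2_def)
    ultimately show ?thesis by simp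
  qed
  have d1: "((\<lambda>s. psi x1 s) has_vector_derivative T1) (at t)"
  proof -
    have "((\<lambda>s. psi x1 s) has_vector_derivative vector_derivative (\<lambda>s. psi x1 s) (at t)) (at t)"
      using diff nz1 vector_derivative_works by blast
    moreover have "vector_derivative (\<lambda>s. psi x1 s) (at t) = T1"
      using schr nz1 by (simp add: T1_def qD_def h_def Q_def x1_def x2_def x3_def mult_ac H_def M_def p1_def p2_def p3_def x2_def x3_def)
    ultimately show ?thesis by simp
  qed
  define K where "K = - (\<i> * H / M) / h"
  have ufun: "(\<lambda>s. u x s) = (\<lambda>s. (K * (psi x1 s - psi x s)) / psi x s)"
    by (simp add: fun_eq_iff u_def qD_def K_def H_def M_def h_def x1_def)
  define ut where "ut = ((- (\<i> * H / M) / h * (T1 - T0)) * p0 - (- (\<i> * H / M) / h * (p1 - p0)) * T0) / (p0 * p0)"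
  have "((\<lambda>s. K * (psi x1 s - psi x s) / psi x s) has_vector_derivative
      ((K*(T1-T0)) * psi x t - K*(psi x1 t - psi x t)*T0)/(psi x t * psi x t)) (at t)"
    apply (rule vd_div)
      apply (rule has_vector_derivative_mult_right)
      apply (rule has_vector_derivative_diff[OF d1 d0])
     apply (rule d0)
    using pnz by (simp add: p0_def)
  then have "((\<lambda>s. u x s) has_vector_derivative ut) (at t)"
    unfolding ufun ut_def K_def p0_def p1_def .
  then have vd: "vector_derivative (\<lambda>s. u x s) (at t) = ut" by (rule vector_derivative_at)
  define u0 where "u0 = u x t"
  define u1 where "u1 = u x1 t"
  define u2 where "u2 = u x2 t"
  have u0: "u0 = - (\<i> * H / M) * ((p1 - p0)/h) / p0"
    by (simp add: u0_def u_def qD_def h_def Q_def x1_def x2_def x3_def mult_ac H_def M_def p0_def p1_def x1_def)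
  have u1: "u1 = - (\<i> * H / M) * ((p2 - p1)/(Q*h)) / p1"
    by (simp add: u1_def u_def qD_def h_def Q_def x1_def x2_def x3_def mult_ac H_def M_def p1_def p2_def x2_def)
  have u2: "u2 = - (\<i> * H / M) * ((p3 - p2)/(Q*(Q*h))) / p2"
    by (simp add: u2_def u_def qD_def h_def Q_def x1_def x2_def x3_def mult_ac H_def M_def p2_def p3_def x3_def)
  have key: "\<i> * H * ut + (H^2 / (2*M)) * (((u2 - u1)/(Q*h) - (u1-u0)/h) / h)
     = \<i> * H / 2 * u0 * ((u1 - u0)/h - (u2-u1)/(Q*h))
       - \<i> * H / 2 * ((u2*u1 - u1*u0)/h)
       + (M / 2) * (u2 - u0) * u1 * u0"
    by (rule alg[OF Q0 h0 pnz M0 T0_def T1_def u0 u1 u2 ut_def])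
  show "\<i> * complex_of_real hbar * vector_derivative (\<lambda>s. u x s) (at t)
       + complex_of_real (hbar ^ 2 / (2 * m)) * qD q (qD q (\<lambda>y. u y t)) x
     = \<i> * complex_of_real hbar / 2 * u x t * (qD q (\<lambda>y. u y t) x - qD q (\<lambda>y. u y t) (q * x))
       - \<i> * complex_of_real hbar / 2 * qD q (\<lambda>y. u (q * y) t * u y t) x
       + complex_of_real (m / 2) * (u (q ^ 2 * x) t - u x t) * u (q * x) t * u x t"
    unfolding vd qq using key
    by (simp add: qD_def h_def Q_def x1_def x2_def x3_def mult_ac flip: x1_def x2_def)
      (simp add: h_def Q_def x1_def x2_def x3_def mult_ac u0_def u1_def u2_def H_def M_def)
qed

end
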